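(* Let $V$ be a finite nonempty set and $f:\{0,1\}^V\to\{0,1\}^V$. If $f$ has no even-self-dual and no odd-self-dual subnetwork, then $f$ has a unique fixed point $x$, and for every $y\in\{0,1\}^V$ the asynchronous state graph $\Gamma(f)$ contains a directed path from $y$ to $x$ of length $d(x,y)$.
   Context: For $x,y\in\{0,1\}^V$, $x\oplus y$ is componentwise addition mod 2, $1$ is the all-ones point, $e_i$ is the point whose only $1$ is at component $i$, $\|x\|$ is the number of $1$s of $x$, and $d(x,y)=\|x\oplus y\|$ is the Hamming distance; $x$ is even (odd) if $\|x\|$ is even (odd). The conjugate of a network $g$ on $W$ is $\tilde g(x)=g(x)\oplus x$. For nonempty $I\subseteq V$ and $z\in\{0,1\}^{V\setminus I}$, the subnetwork of $f$ induced by $z$ is $h:\{0,1\}^I\to\{0,1\}^I$ with $h(x|_I)=f(x)|_I$ for all $x$ whose restriction to $V\setminus I$ is $z$ ($f$ is a subnetwork of itself). A network $g$ on $W$ is self-dual if $g(x\oplus 1)=g(x)\oplus 1$ for all $x$; even (odd) if $\tilde g(\{0,1\}^W)$ is exactly the set of even (odd) points; even-self-dual (odd-self-dual) if both even (odd) and self-dual. The asynchronous state graph $\Gamma(f)$ is the digraph on vertex set $\{0,1\}^V$ with an arc $x\to x\oplus e_i$ for every $x$ and $i\in V$ such that $f_i(x)\neq x_i$. *)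

theory Defs
  imports Main
begin

text \<open>Points of {0,1}^W are represented by subsets of W (the set of components equal to 1).
  Componentwise xor is symmetric difference; the all-ones point is W itself;
  e_i is {i}; the number of ones is card; Hamming distance is card of the symmetric difference.
  A network on W is a map g with g x \<subseteq> W for all x \<subseteq> W (only its values on Pow W matter).\<close>

definition xor :: "'v set \<Rightarrow> 'v set \<Rightarrow> 'v set" where
  "xor x y = (x - y) \<union> (y - x)"

definition hamming :: "'v set \<Rightarrow> 'v set \<Rightarrow> nat" where
  "hamming x y = card (xor x y)"

definition network :: "'v set \<Rightarrow> ('v set \<Rightarrow> 'v set) \<Rightarrow> bool" where
  "network W g \<longleftrightarrow> (\<forall>x. x \<subseteq> W \<longrightarrow> g x \<subseteq> W)"

definition conjugate :: "('v set \<Rightarrow> 'v set) \<Rightarrow> 'v set \<Rightarrow> 'v set" where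
  "conjugate g x = xor (g x) x"

definition self_dual :: "'v set \<Rightarrow> ('v set \<Rightarrow> 'v set) \<Rightarrow> bool" where
  "self_dual W g \<longleftrightarrow> (\<forall>x. x \<subseteq> W \<longrightarrow> g (xor x W) = xor (g x) W)"

definition even_net :: "'v set \<Rightarrow> ('v set \<Rightarrow> 'v set) \<Rightarrow> bool" where
  "even_net W g \<longleftrightarrow> conjugate g ` Pow W = {x. x \<subseteq> W \<and> even (card x)}"

definition odd_net :: "'v set \<Rightarrow> ('v set \<Rightarrow> 'v set) \<Rightarrow> bool" where
  "odd_net W g \<longleftrightarrow> conjugate g ` Pow W = {x. x \<subseteq> W \<and> odd (card x)}"

definition even_self_dual :: "'v set \<Rightarrow> ('v set \<Rightarrow> 'v set) \<Rightarrow> bool" where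
  "even_self_dual W g \<longleftrightarrow> even_net W g \<and> self_dual W g"

definition odd_self_dual :: "'v set \<Rightarrow> ('v set \<Rightarrow> 'v set) \<Rightarrow> bool" where
  "odd_self_dual W g \<longleftrightarrow> odd_net W g \<and> self_dual W g"

text \<open>Subnetwork of f (on V) on the nonempty component set I \<subseteq> V induced by z \<subseteq> V - I:
  h(x|_I) = f(x)|_I where x agrees with z outside I.\<close>
definition subnet :: "('v set \<Rightarrow> 'v set) \<Rightarrow> 'v set \<Rightarrow> 'v set \<Rightarrow> 'v set \<Rightarrow> 'v set" where
  "subnet f I z = (\<lambda>x. f (x \<union> z) \<inter> I)"

definition has_subnet :: "'v set \<Rightarrow> ('v set \<Rightarrow> 'v set)
    \<Rightarrow> ('v set \<Rightarrow> ('v set \<Rightarrow> 'v set) \<Rightarrow> bool) \<Rightarrow> bool" where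
  "has_subnet V f P \<longleftrightarrow>
     (\<exists>I z. I \<noteq> {} \<and> I \<subseteq> V \<and> z \<subseteq> V - I \<and> P I (subnet f I z))"

definition async_arc :: "'v set \<Rightarrow> ('v set \<Rightarrow> 'v set) \<Rightarrow> 'v set \<Rightarrow> 'v set \<Rightarrow> bool" where
  "async_arc V f x y \<longleftrightarrow> x \<subseteq> V \<and>
     (\<exists>i\<in>V. (i \<in> f x) \<noteq> (i \<in> x) \<and> y = xor x {i})"

definition async_path :: "'v set \<Rightarrow> ('v set \<Rightarrow> 'v set) \<Rightarrow> 'v set \<Rightarrow> 'v set \<Rightarrow> nat \<Rightarrow> bool" where
  "async_path V f y x k \<longleftrightarrow>
     (\<exists>ps. length ps = Suc k \<and> ps ! 0 = y \<and> ps ! k = x \<and>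
        (\<forall>j<k. async_arc V f (ps ! j) (ps ! Suc j)))"

end

theory Submission
  imports Defs
begin

lemma xor_mem: "i \<in> xor a b \<longleftrightarrow> (i \<in> a) \<noteq> (i \<in> b)"
  by (auto simp: xor_def)

lemma xor_empty: "xor a b = {} \<longleftrightarrow> a = b"
  unfolding xor_def by blast

lemma conj_sub_eq: "conjugate (subnet f I z) u = xor (f (u \<union> z) \<inter> I) u"
  by (simp add: conjugate_def subnet_def)

lemma restr:
  assumes "U \<subseteq> I" "u \<subseteq> U" "a \<inter> U = {}"
  shows "conjugate (subnet f U (z \<union> a)) u = conjugate (subnet f I z) (u \<union> a) \<inter> U"
proof -
  have "u \<union> (z \<union> a) = (u \<union> a) \<union> z" by auto
  then show ?thesis using assms by (auto simp: conjugate_def subnet_def xor_def)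
qed

lemma conj_in: "u \<subseteq> I \<Longrightarrow> conjugate (subnet f I z) u \<subseteq> I"
  by (auto simp: conjugate_def subnet_def xor_def)

context
  fixes V :: "'v set" and f :: "'v set \<Rightarrow> 'v set"
  assumes finV: "finite V" and net: "network V f"
    and H1: "\<not> has_subnet V f even_self_dual"
    and H2: "\<not> has_subnet V f odd_self_dual"
begin

lemma main: "I \<subseteq> V \<Longrightarrow> z \<subseteq> V - I \<Longrightarrow> inj_on (conjugate (subnet f I z)) (Pow I)"
proof (induction "card I" arbitrary: I z rule: less_induct)
  case less
  have finI: "finite I" using less.prems finV finite_subset by blast
  have IHp: "inj_on (conjugate (subnet f U z')) (Pow U)" if "U \<subset> I" "z' \<subseteq> V - U" for U z'
  proof -
    have "card U < card I" using psubset_card_mono[OF finI that(1)] .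
    moreover have "U \<subseteq> V" using that(1) less.prems(1) by auto
    ultimately show ?thesis using less.hyps that(2) by blast
  qed
  have IHs: "conjugate (subnet f U z') ` Pow U = Pow U" if "U \<subset> I" "z' \<subseteq> V - U" for U z'
  proof (rule endo_inj_surj)
    show "finite (Pow U)" using that(1) finI finite_subset by auto
    show "conjugate (subnet f U z') ` Pow U \<subseteq> Pow U" using conj_in by blast
    show "inj_on (conjugate (subnet f U z')) (Pow U)" using IHp[OF that] .
  qed
  define G where "G = conjugate (subnet f I z)"
  have Gsub: "\<And>w. w \<subseteq> I \<Longrightarrow> G w \<subseteq> I" unfolding G_def using conj_in by blast
  show ?case
  proof (cases "I = {}")
    case True then show ?thesis by simp
  next
    case Ine: False
    have coll: "w2 = I - w1" if a: "w1 \<subseteq> I" "w2 \<subseteq> I" "G w1 = G w2" "w1 \<noteq> w2" for w1 w2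
    proof -
      define D where "D = xor w1 w2"
      have DI: "D \<subseteq> I" using a by (auto simp: D_def xor_def)
      show "w2 = I - w1"
      proof (cases "D = I")
        case True then show ?thesis using a by (auto simp: D_def xor_def)
      next
        case False
        then have psub: "D \<subset> I" using DI by auto
        define b where "b = w1 - D"
        have b2: "b = w2 - D" by (auto simp: b_def D_def xor_def)
        have bD: "b \<inter> D = {}" by (auto simp: b_def)
        have zb: "z \<union> b \<subseteq> V - D" using less.prems a by (auto simp: b_def D_def xor_def)
        have u1: "(w1 \<inter> D) \<union> b = w1" by (auto simp: b_def)
        have u2: "(w2 \<inter> D) \<union> b = w2" by (auto simp: b2)
        have e1: "conjugate (subnet f D (z \<union> b)) (w1 \<inter> D) = G w1 \<inter> D"
          using restr[where U=D and I=I and u="w1 \<inter> D" and a=b and z=z and f=f] psub bD u1 unfolding G_def by auto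
        have e2: "conjugate (subnet f D (z \<union> b)) (w2 \<inter> D) = G w2 \<inter> D"
          using restr[where U=D and I=I and u="w2 \<inter> D" and a=b and z=z and f=f] psub bD u2 unfolding G_def by auto
        have "w1 \<inter> D = w2 \<inter> D"
          using inj_onD[OF IHp[OF psub zb], of "w1 \<inter> D" "w2 \<inter> D"] e1 e2 a(3) by auto
        then have "w1 = w2" using u1 u2 by metis
        then show ?thesis using a(4) by simp
      qed
    qed
    have count: "card {w \<in> Pow I. G w \<subseteq> R} = 2 ^ card R" if R: "R \<subseteq> I" "R \<noteq> {}" for R
    proof -
      define U where "U = I - R"
      have psub: "U \<subset> I" using R by (auto simp: U_def)
      have bij: "bij_betw (\<lambda>w. w \<inter> R) {w \<in> Pow I. G w \<subseteq> R} (Pow R)"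
      proof (rule bij_betw_imageI)
        show "inj_on (\<lambda>w. w \<inter> R) {w \<in> Pow I. G w \<subseteq> R}"
        proof (rule inj_onI)
          fix w1 w2 assume w1: "w1 \<in> {w \<in> Pow I. G w \<subseteq> R}" and w2: "w2 \<in> {w \<in> Pow I. G w \<subseteq> R}"
            and eq: "w1 \<inter> R = w2 \<inter> R"
          define a where "a = w1 \<inter> R"
          have za: "z \<union> a \<subseteq> V - U" using less.prems R by (auto simp: a_def U_def)
          have aU: "a \<inter> U = {}" by (auto simp: a_def U_def)
          have v1: "(w1 \<inter> U) \<union> a = w1" using w1 by (auto simp: a_def U_def)
          have v2: "(w2 \<inter> U) \<union> a = w2" using w2 eq by (auto simp: a_def U_def)
          have c1: "conjugate (subnet f U (z \<union> a)) (w1 \<inter> U) = {}"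
            using restr[where U=U and I=I and u="w1 \<inter> U" and a=a and z=z and f=f] psub aU v1 w1 unfolding G_def U_def by auto
          have c2: "conjugate (subnet f U (z \<union> a)) (w2 \<inter> U) = {}"
            using restr[where U=U and I=I and u="w2 \<inter> U" and a=a and z=z and f=f] psub aU v2 w2 unfolding G_def U_def by auto
          have "w1 \<inter> U = w2 \<inter> U"
            using inj_onD[OF IHp[OF psub za], of "w1 \<inter> U" "w2 \<inter> U"] c1 c2 by auto
          then show "w1 = w2" using v1 v2 by metis
        qed
        show "(\<lambda>w. w \<inter> R) ` {w \<in> Pow I. G w \<subseteq> R} = Pow R"
        proof
          show "(\<lambda>w. w \<inter> R) ` {w \<in> Pow I. G w \<subseteq> R} \<subseteq> Pow R" by auto
          show "Pow R \<subseteq> (\<lambda>w. w \<inter> R) ` {w \<in> Pow I. G w \<subseteq> R}"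
          proof
            fix a assume aR: "a \<in> Pow R"
            have za: "z \<union> a \<subseteq> V - U" using less.prems R aR by (auto simp: U_def)
            have aU: "a \<inter> U = {}" using aR by (auto simp: U_def)
            have "{} \<in> conjugate (subnet f U (z \<union> a)) ` Pow U" using IHs[OF psub za] by auto
            then obtain u where u: "u \<subseteq> U" "conjugate (subnet f U (z \<union> a)) u = {}" by auto
            have "G (u \<union> a) \<inter> U = {}"
              using restr[where U=U and I=I and u=u and a=a and z=z and f=f] psub aU u unfolding G_def by auto
            moreover have wI: "u \<union> a \<subseteq> I" using u aR R psub by auto
            ultimately have "G (u \<union> a) \<subseteq> R" using Gsub[OF wI] by (auto simp: U_def)
            moreover have "(u \<union> a) \<inter> R = a" using u aR by (auto simp: U_def)
            ultimately show "a \<in> (\<lambda>w. w \<inter> R) ` {w \<in> Pow I. G w \<subseteq> R}" using wI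
              by (intro image_eqI[where x="u \<union> a"]) auto
          qed
        qed
      qed
      have "finite R" using R finI finite_subset by auto
      then show ?thesis using bij_betw_same_card[OF bij] card_Pow by metis
    qed
    define N where "N P R = card {w \<in> Pow I. P \<subseteq> G w \<and> G w \<subseteq> R}" for P R
    define k where "k = card {w \<in> Pow I. G w = {}}"
    have finS: "finite {w \<in> Pow I. P w}" for P using finI by auto
    have k2: "k \<le> 2"
    proof -
      obtain j where j: "j \<in> I" using Ine by auto
      have "{w \<in> Pow I. G w = {}} \<subseteq> {w \<in> Pow I. G w \<subseteq> {j}}" by auto
      then have "k \<le> card {w \<in> Pow I. G w \<subseteq> {j}}" unfolding k_def using card_mono finS by metis
      also have "\<dots> = 2" using count[of "{j}"] j by simp
      finally show ?thesis .
    qed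
    have Nf: "finite P \<Longrightarrow> P \<subseteq> R \<Longrightarrow> R \<subseteq> I \<Longrightarrow> N P R =
       (if P = R then (if even (card P) then k else 2 - k) else 2 ^ (card R - card P))" for P R
    proof (induction P arbitrary: R rule: finite_induct)
      case empty
      show ?case
      proof (cases "R = {}")
        case True
        then show ?thesis unfolding N_def k_def by simp
      next
        case False
        then show ?thesis using count[OF empty.prems(2)] unfolding N_def by simp
      qed
    next
      case (insert j P)
      have jR: "j \<in> R" "P \<subseteq> R - {j}" using insert by auto
      have finR: "finite R" using insert.prems finI finite_subset by auto
      have split: "{w \<in> Pow I. P \<subseteq> G w \<and> G w \<subseteq> R} = {w \<in> Pow I. insert j P \<subseteq> G w \<and> G w \<subseteq> R}
          \<union> {w \<in> Pow I. P \<subseteq> G w \<and> G w \<subseteq> R - {j}}" by auto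
      have eq: "N P R = N (insert j P) R + N P (R - {j})"
        unfolding N_def split by (rule card_Un_disjoint) (force intro: finite_subset[where B="Pow I"] simp: finI)+
      have PR': "P \<subseteq> R" using insert.prems by auto
      have RI': "R - {j} \<subseteq> I" using insert.prems by auto
      have A: "N P R = (if P = R then (if even (card P) then k else 2 - k) else 2 ^ (card R - card P))"
        by (rule insert.IH[OF PR' insert.prems(2)])
      have B: "N P (R - {j}) = (if P = R - {j} then (if even (card P) then k else 2 - k)
           else 2 ^ (card (R - {j}) - card P))"
        by (rule insert.IH[OF jR(2) RI'])
      have cR: "card (R - {j}) = card R - 1" using jR finR by simp
      have cP: "card (insert j P) = Suc (card P)" using insert by simp
      have PR: "P \<noteq> R" using jR insert by auto
      show ?case
      proof (cases "insert j P = R")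
        case True
        then have P1: "P = R - {j}" using insert by auto
        have c1: "card R = Suc (card P)" using True cP by simp
        have n1: "N P R = 2" using A PR c1 by simp
        have n2: "N P (R - {j}) = (if even (card P) then k else 2 - k)" using B P1 by simp
        have "N (insert j P) R = (if even (card (insert j P)) then k else 2 - k)"
          using eq n1 n2 cP k2 by (cases "even (card P)") auto
        then show ?thesis using True by simp
      next
        case False
        have "card (insert j P) < card R" using False insert.prems finR psubset_card_mono by blast
        then obtain m where m: "card R = card P + 2 + m" using cP
          by (metis add_Suc_right add_2_eq_Suc' less_iff_Suc_add add.commute)
        have P2: "P \<noteq> R - {j}" using False jR by auto
        have n1: "N P R = 2 ^ (m + 2)" using A PR m by simp
        have n2: "N P (R - {j}) = 2 ^ (m + 1)" using B P2 cR m by simp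
        have "N (insert j P) R = 2 ^ (m + 1)" using eq n1 n2 by simp
        then show ?thesis using False m cP by simp
      qed
    qed
    have fib: "card {w \<in> Pow I. G w = T} = (if even (card T) then k else 2 - k)" if "T \<subseteq> I" for T
    proof -
      have "{w \<in> Pow I. G w = T} = {w \<in> Pow I. T \<subseteq> G w \<and> G w \<subseteq> T}" by auto
      moreover have "finite T" using that finI finite_subset by auto
      ultimately show ?thesis using Nf[of T T] that unfolding N_def by simp
    qed
    show ?thesis
    proof (cases "k = 1")
      case True
      show ?thesis unfolding G_def[symmetric]
      proof (rule inj_onI)
        fix w1 w2 assume w: "w1 \<in> Pow I" "w2 \<in> Pow I" "G w1 = G w2"
        have "card {w \<in> Pow I. G w = G w1} \<le> Suc 0" using fib[OF Gsub] w True by auto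
        then show "w1 = w2" using card_le_Suc0_iff_eq[OF finS[of "\<lambda>v. G v = G w1"]] w by auto
      qed
    next
      case False
      then have k02: "k = 0 \<or> k = 2" using k2 by auto
      have sd: "G (I - w) = G w" if w: "w \<subseteq> I" for w
      proof -
        have ne: "w \<in> {v \<in> Pow I. G v = G w}" using w by auto
        then have "card {v \<in> Pow I. G v = G w} \<noteq> 0" using finS[of "\<lambda>v. G v = G w"] by (metis card_0_eq empty_iff)
        then have "card {v \<in> Pow I. G v = G w} = 2" using fib[OF Gsub[OF w]] k02 by (cases "even (card (G w))") auto
        then have "\<not> card {v \<in> Pow I. G v = G w} \<le> Suc 0" by simp
        then obtain a b where ab: "a \<in> {v \<in> Pow I. G v = G w}" "b \<in> {v \<in> Pow I. G v = G w}" "a \<noteq> b"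
          using card_le_Suc0_iff_eq[OF finS[of "\<lambda>v. G v = G w"]] by blast
        then obtain w' where w': "w' \<in> {v \<in> Pow I. G v = G w}" "w' \<noteq> w" by metis
        then have "w' = I - w" using coll[of w w'] w by auto
        then show ?thesis using w' by auto
      qed
      have selfd: "self_dual I (subnet f I z)"
        unfolding self_dual_def
      proof (intro allI impI)
        fix x assume x: "x \<subseteq> I"
        have s: "subnet f I z u = xor (G u) u" for u
          unfolding G_def by (auto simp: conjugate_def xor_def)
        have xI: "xor x I = I - x" using x by (auto simp: xor_def)
        have "subnet f I z (xor x I) = xor (G x) (I - x)" using s[of "I - x"] sd[OF x] xI by simp
        also have "\<dots> = xor (xor (G x) x) I" using Gsub[OF x] x by (auto simp: xor_def)
        finally show "subnet f I z (xor x I) = xor (subnet f I z x) I" using s[of x] by simp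
      qed
      have img: "G ` Pow I = {x. x \<subseteq> I \<and> (if k = 0 then odd (card x) else even (card x))}"
      proof
        show "G ` Pow I \<subseteq> {x. x \<subseteq> I \<and> (if k = 0 then odd (card x) else even (card x))}"
        proof
          fix T assume "T \<in> G ` Pow I"
          then obtain w where w: "w \<subseteq> I" "T = G w" by auto
          have "w \<in> {v \<in> Pow I. G v = T}" using w by auto
          then have "card {v \<in> Pow I. G v = T} \<noteq> 0" using finS[of "\<lambda>v. G v = T"] by (metis card_0_eq empty_iff)
          then show "T \<in> {x. x \<subseteq> I \<and> (if k = 0 then odd (card x) else even (card x))}"
            using fib[of T] Gsub[OF w(1)] w k02 by (cases "even (card T)") auto
        qed
        show "{x. x \<subseteq> I \<and> (if k = 0 then odd (card x) else even (card x))} \<subseteq> G ` Pow I"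
        proof
          fix T assume T: "T \<in> {x. x \<subseteq> I \<and> (if k = 0 then odd (card x) else even (card x))}"
          then have "card {v \<in> Pow I. G v = T} = 2" using fib[of T] k02 by (cases "k = 0") auto
          then have "{v \<in> Pow I. G v = T} \<noteq> {}" by (metis card.empty zero_neq_numeral)
          then show "T \<in> G ` Pow I" by auto
        qed
      qed
      show ?thesis
      proof (cases "k = 0")
        case True
        have "odd_self_dual I (subnet f I z)"
          unfolding odd_self_dual_def odd_net_def using selfd img True G_def by simp
        then have "has_subnet V f odd_self_dual" unfolding has_subnet_def using Ine less.prems by blast
        then show ?thesis using H2 by blast
      next
        case False
        have "even_self_dual I (subnet f I z)"
          unfolding even_self_dual_def even_net_def using selfd img False G_def by simp
        then have "has_subnet V f even_self_dual" unfolding has_subnet_def using Ine less.prems by blast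
        then show ?thesis using H1 by blast
      qed
    qed
  qed
qed

lemma step_exists:
  assumes x: "x \<subseteq> V" "f x = x" and w: "w \<subseteq> V" "w \<noteq> x"
  shows "\<exists>i\<in>V. (i \<in> f w) \<noteq> (i \<in> w) \<and> i \<in> xor w x"
proof -
  define D where "D = xor w x"
  have DV: "D \<subseteq> V" using x w by (auto simp: D_def xor_def)
  define z where "z = x - D"
  have zD: "z \<subseteq> V - D" using x by (auto simp: z_def)
  have inj: "inj_on (conjugate (subnet f D z)) (Pow D)" using main[OF DV zD] .
  have ex: "(x \<inter> D) \<union> z = x" by (auto simp: z_def)
  have ew: "(w \<inter> D) \<union> z = w" by (auto simp: z_def D_def xor_def)
  have c1: "conjugate (subnet f D z) (x \<inter> D) = {}"
    unfolding conj_sub_eq ex x(2) by (auto simp: xor_def)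
  have "D \<noteq> {}"
  proof
    assume "D = {}"
    then have "\<And>i. (i \<in> w) = (i \<in> x)" unfolding D_def xor_def by blast
    then show False using w(2) by blast
  qed
  then obtain i0 where i0: "i0 \<in> D" by blast
  have ne: "x \<inter> D \<noteq> w \<inter> D"
  proof
    assume "x \<inter> D = w \<inter> D"
    then have "(i0 \<in> x) = (i0 \<in> w)" using i0 by blast
    then show False using i0 unfolding D_def xor_def by blast
  qed
  have "conjugate (subnet f D z) (w \<inter> D) \<noteq> {}"
  proof
    assume "conjugate (subnet f D z) (w \<inter> D) = {}"
    then have "x \<inter> D = w \<inter> D" using inj_onD[OF inj, of "x \<inter> D" "w \<inter> D"] c1 by auto
    then show False using ne by blast
  qed
  then obtain i where "i \<in> conjugate (subnet f D z) (w \<inter> D)" by blast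
  then have "i \<in> xor (f w \<inter> D) (w \<inter> D)" unfolding conj_sub_eq ew .
  then have "i \<in> D" "(i \<in> f w) \<noteq> (i \<in> w)" by (auto simp: xor_def)
  then show ?thesis using DV unfolding D_def by blast
qed

lemma path_ex:
  assumes x: "x \<subseteq> V" "f x = x"
  shows "\<forall>w. w \<subseteq> V \<longrightarrow> hamming x w = n \<longrightarrow> async_path V f w x n"
proof (induction n)
  case 0
  show ?case
  proof (intro allI impI)
    fix w assume w: "w \<subseteq> V" "hamming x w = 0"
    have "finite (xor x w)" using w x finV by (auto simp: xor_def intro: finite_subset)
    then have "xor x w = {}" using w(2) by (simp add: hamming_def)
    then have "w = x" by (auto simp: xor_def)
    then show "async_path V f w x 0" unfolding async_path_def by (intro exI[of _ "[x]"]) simp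
  qed
next
  case (Suc n)
  show ?case
  proof (intro allI impI)
    fix w assume w: "w \<subseteq> V" "hamming x w = Suc n"
    have finx: "finite (xor x w)" using w x finV by (auto simp: xor_def intro: finite_subset)
    have "w \<noteq> x"
    proof
      assume "w = x"
      then have "hamming x w = 0" by (simp add: hamming_def xor_def)
      then show False using w(2) by simp
    qed
    then obtain i where i: "i \<in> V" "(i \<in> f w) \<noteq> (i \<in> w)" "i \<in> xor w x"
      using step_exists[OF x w(1)] by blast
    define w' where "w' = xor w {i}"
    have w'V: "w' \<subseteq> V" using w i by (auto simp: w'_def xor_def)
    have xi: "i \<in> xor x w" using i(3) by (auto simp: xor_def)
    have "xor x w' = xor x w - {i}" using i by (auto simp: w'_def xor_def)
    then have "hamming x w' = n" using w(2) finx xi by (simp add: hamming_def)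
    then obtain ps where ps: "length ps = Suc n" "ps ! 0 = w'" "ps ! n = x"
        "\<forall>j<n. async_arc V f (ps ! j) (ps ! Suc j)"
      using Suc.IH w'V unfolding async_path_def by blast
    show "async_path V f w x (Suc n)" unfolding async_path_def
    proof (intro exI[of _ "w # ps"] conjI allI impI)
      show "length (w # ps) = Suc (Suc n)" using ps by simp
      show "(w # ps) ! 0 = w" by simp
      show "(w # ps) ! Suc n = x" using ps by simp
      fix j assume j: "j < Suc n"
      show "async_arc V f ((w # ps) ! j) ((w # ps) ! Suc j)"
      proof (cases j)
        case 0 then show ?thesis using ps(2) w i unfolding async_arc_def w'_def by auto
      next
        case (Suc j') then show ?thesis using ps(4) j by simp
      qed
    qed
  qed
qed

lemma final: "\<exists>x. x \<subseteq> V \<and> f x = x \<and> (\<forall>x'. x' \<subseteq> V \<and> f x' = x' \<longrightarrow> x' = x) \<and>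
           (\<forall>y. y \<subseteq> V \<longrightarrow> async_path V f y x (hamming x y))"
proof -
  have inj: "inj_on (conjugate (subnet f V {})) (Pow V)" using main[of V "{}"] by simp
  have eqc: "conjugate (subnet f V {}) u = xor (f u) u" if "u \<subseteq> V" for u
    using net that by (auto simp: conjugate_def subnet_def xor_def network_def)
  have "conjugate (subnet f V {}) ` Pow V = Pow V"
  proof (rule endo_inj_surj)
    show "finite (Pow V)" using finV by simp
    show "conjugate (subnet f V {}) ` Pow V \<subseteq> Pow V" using conj_in by blast
    show "inj_on (conjugate (subnet f V {})) (Pow V)" by (rule inj)
  qed
  then have "{} \<in> conjugate (subnet f V {}) ` Pow V" by simp
  then obtain x where x: "x \<subseteq> V" "conjugate (subnet f V {}) x = {}" by auto
  have fx: "f x = x" using x eqc[OF x(1)] xor_empty by metis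
  show ?thesis
  proof (intro exI[of _ x] conjI allI impI)
    show "x \<subseteq> V" "f x = x" using x fx by auto
    fix x' assume x': "x' \<subseteq> V \<and> f x' = x'"
    then have "conjugate (subnet f V {}) x' = {}" using eqc[of x'] xor_empty by metis
    then show "x' = x" using inj_onD[OF inj, of x' x] x x' by auto
  next
    fix y assume "y \<subseteq> V"
    then show "async_path V f y x (hamming x y)" using path_ex[OF x(1) fx] by blast
  qed
qed

end

theorem corollary4:
  fixes V :: "'v set" and f :: "'v set \<Rightarrow> 'v set"
  assumes "finite V" and "V \<noteq> {}" and "network V f"
    and "\<not> has_subnet V f even_self_dual"
    and "\<not> has_subnet V f odd_self_dual"
  shows "\<exists>x. x \<subseteq> V \<and> f x = x \<and> (\<forall>x'. x' \<subseteq> V \<and> f x' = x' \<longrightarrow> x' = x) \<and>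
           (\<forall>y. y \<subseteq> V \<longrightarrow> async_path V f y x (hamming x y))"
  using final[OF assms(1) assms(3) assms(4) assms(5)] .

end
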